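(* On bipartite graphs, each of GVC, GVC1 and GVC2 is equivalent to the bipartite unconstrained 0-1 quadratic programming problem BQP01: every instance of one can be formulated as an instance of the other such that an optimal solution of the new instance yields an optimal solution of the original (identifying $U_1\subseteq V_1$, $U_2\subseteq V_2$ with incidence vectors $x\in\{0,1\}^m$, $y\in\{0,1\}^n$).
   Context: Let $G=(V_1,V_2,E)$ be a bipartite graph with $V_1=\{1,\dots,m\}$, $V_2=\{1,\dots,n\}$ and every edge $(i,j)$ having $i\in V_1$, $j\in V_2$. Vertices $i\in V_1$ have weights $c_i$, vertices $j\in V_2$ have weights $d_j$, and each edge has real weights $q^0_{ij},q^1_{ij},q^2_{ij}$. For $U_1\subseteq V_1$, $U_2\subseteq V_2$ let $E_0(U_1,U_2)=\{(i,j)\in E: i\notin U_1, j\notin U_2\}$, $E_1(U_1,U_2)$ the edges with exactly one of $i\in U_1$, $j\in U_2$, and $E_2(U_1,U_2)=\{(i,j)\in E: i\in U_1,j\in U_2\}$. GVC on $G$ minimizes $\sum_{i\in U_1}c_i+\sum_{j\in U_2}d_j+\sum_{E_0}q^0_{ij}+\sum_{E_1}q^1_{ij}+\sum_{E_2}q^2_{ij}$ over $U_1\subseteq V_1,U_2\subseteq V_2$; GVC1 is the special case $q^1\equiv q^2\equiv 0$; GVC2 is the special case $q^0\equiv q^1\equiv 0$. BQP01: given a real $m\times n$ matrix $Q=(q_{ij})$, $a\in\mathbb{R}^m$, $b\in\mathbb{R}^n$, minimize $\sum_i a_ix_i+\sum_j b_jy_j+\sum_{i,j}q_{ij}x_iy_j$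 over $x\in\{0,1\}^m$, $y\in\{0,1\}^n$. Two problems are equivalent if each can be formulated as the other so that an optimal solution of the formulated instance gives an optimal solution of the original. *)

theory Defs
  imports Complex_Main
begin

definition bip_graph :: "nat \<Rightarrow> nat \<Rightarrow> (nat \<times> nat) set \<Rightarrow> bool" where
  "bip_graph m n E \<longleftrightarrow> E \<subseteq> {1..m} \<times> {1..n}"

definition E0 :: "(nat \<times> nat) set \<Rightarrow> nat set \<Rightarrow> nat set \<Rightarrow> (nat \<times> nat) set" where
  "E0 E U1 U2 = {(i,j) \<in> E. i \<notin> U1 \<and> j \<notin> U2}"
definition E1 :: "(nat \<times> nat) set \<Rightarrow> nat set \<Rightarrow> nat set \<Rightarrow> (nat \<times> nat) set" where
  "E1 E U1 U2 = {(i,j) \<in> E. (i \<in> U1) \<noteq> (j \<in> U2)}"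
definition E2 :: "(nat \<times> nat) set \<Rightarrow> nat set \<Rightarrow> nat set \<Rightarrow> (nat \<times> nat) set" where
  "E2 E U1 U2 = {(i,j) \<in> E. i \<in> U1 \<and> j \<in> U2}"

definition gvc_obj ::
  "(nat \<times> nat) set \<Rightarrow> (nat \<Rightarrow> real) \<Rightarrow> (nat \<Rightarrow> real) \<Rightarrow>
   (nat \<Rightarrow> nat \<Rightarrow> real) \<Rightarrow> (nat \<Rightarrow> nat \<Rightarrow> real) \<Rightarrow> (nat \<Rightarrow> nat \<Rightarrow> real) \<Rightarrow>
   nat set \<Rightarrow> nat set \<Rightarrow> real" where
  "gvc_obj E c d q0 q1 q2 U1 U2 =
     (\<Sum>i\<in>U1. c i) + (\<Sum>j\<in>U2. d j)
     + (\<Sum>(i,j)\<in>E0 E U1 U2. q0 i j)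
     + (\<Sum>(i,j)\<in>E1 E U1 U2. q1 i j)
     + (\<Sum>(i,j)\<in>E2 E U1 U2. q2 i j)"

definition gvc_opt ::
  "nat \<Rightarrow> nat \<Rightarrow> (nat \<times> nat) set \<Rightarrow> (nat \<Rightarrow> real) \<Rightarrow> (nat \<Rightarrow> real) \<Rightarrow>
   (nat \<Rightarrow> nat \<Rightarrow> real) \<Rightarrow> (nat \<Rightarrow> nat \<Rightarrow> real) \<Rightarrow> (nat \<Rightarrow> nat \<Rightarrow> real) \<Rightarrow>
   nat set \<Rightarrow> nat set \<Rightarrow> bool" where
  "gvc_opt m n E c d q0 q1 q2 U1 U2 \<longleftrightarrow>
     U1 \<subseteq> {1..m} \<and> U2 \<subseteq> {1..n} \<and>
     (\<forall>W1 W2. W1 \<subseteq> {1..m} \<longrightarrow> W2 \<subseteq> {1..n} \<longrightarrow>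
        gvc_obj E c d q0 q1 q2 U1 U2 \<le> gvc_obj E c d q0 q1 q2 W1 W2)"

text \<open>BQP01 objective, feasibility (0-1 vectors indexed by {1..m}, {1..n};
  entries outside the index range are irrelevant) and optimality.\<close>
definition bqp_obj ::
  "nat \<Rightarrow> nat \<Rightarrow> (nat \<Rightarrow> nat \<Rightarrow> real) \<Rightarrow> (nat \<Rightarrow> real) \<Rightarrow> (nat \<Rightarrow> real) \<Rightarrow>
   (nat \<Rightarrow> real) \<Rightarrow> (nat \<Rightarrow> real) \<Rightarrow> real" where
  "bqp_obj m n Q a b x y =
     (\<Sum>i=1..m. a i * x i) + (\<Sum>j=1..n. b j * y j)
     + (\<Sum>i=1..m. \<Sum>j=1..n. Q i j * x i * y j)"

definition bqp_feas :: "nat \<Rightarrow> nat \<Rightarrow> (nat \<Rightarrow> real) \<Rightarrow> (nat \<Rightarrow> real) \<Rightarrow> bool" where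
  "bqp_feas m n x y \<longleftrightarrow> (\<forall>i\<in>{1..m}. x i \<in> {0,1}) \<and> (\<forall>j\<in>{1..n}. y j \<in> {0,1})"

definition bqp_opt ::
  "nat \<Rightarrow> nat \<Rightarrow> (nat \<Rightarrow> nat \<Rightarrow> real) \<Rightarrow> (nat \<Rightarrow> real) \<Rightarrow> (nat \<Rightarrow> real) \<Rightarrow>
   (nat \<Rightarrow> real) \<Rightarrow> (nat \<Rightarrow> real) \<Rightarrow> bool" where
  "bqp_opt m n Q a b x y \<longleftrightarrow> bqp_feas m n x y \<and>
     (\<forall>x' y'. bqp_feas m n x' y' \<longrightarrow> bqp_obj m n Q a b x y \<le> bqp_obj m n Q a b x' y')"

definition incid :: "nat set \<Rightarrow> nat \<Rightarrow> real" where
  "incid U = (\<lambda>i. if i \<in> U then 1 else 0)"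

definition supp01 :: "nat \<Rightarrow> (nat \<Rightarrow> real) \<Rightarrow> nat set" where
  "supp01 k x = {i\<in>{1..k}. x i = 1}"

definition cls_GVC :: "(nat \<Rightarrow> nat \<Rightarrow> real) \<Rightarrow> (nat \<Rightarrow> nat \<Rightarrow> real) \<Rightarrow> (nat \<Rightarrow> nat \<Rightarrow> real) \<Rightarrow> bool" where
  "cls_GVC q0 q1 q2 \<longleftrightarrow> True"
definition cls_GVC1 :: "(nat \<Rightarrow> nat \<Rightarrow> real) \<Rightarrow> (nat \<Rightarrow> nat \<Rightarrow> real) \<Rightarrow> (nat \<Rightarrow> nat \<Rightarrow> real) \<Rightarrow> bool" where
  "cls_GVC1 q0 q1 q2 \<longleftrightarrow> q1 = (\<lambda>i j. 0) \<and> q2 = (\<lambda>i j. 0)"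
definition cls_GVC2 :: "(nat \<Rightarrow> nat \<Rightarrow> real) \<Rightarrow> (nat \<Rightarrow> nat \<Rightarrow> real) \<Rightarrow> (nat \<Rightarrow> nat \<Rightarrow> real) \<Rightarrow> bool" where
  "cls_GVC2 q0 q1 q2 \<longleftrightarrow> q0 = (\<lambda>i j. 0) \<and> q1 = (\<lambda>i j. 0)"

definition gvc_formulated_as_bqp ::
  "nat \<Rightarrow> nat \<Rightarrow> (nat \<times> nat) set \<Rightarrow> (nat \<Rightarrow> real) \<Rightarrow> (nat \<Rightarrow> real) \<Rightarrow>
   (nat \<Rightarrow> nat \<Rightarrow> real) \<Rightarrow> (nat \<Rightarrow> nat \<Rightarrow> real) \<Rightarrow> (nat \<Rightarrow> nat \<Rightarrow> real) \<Rightarrow> bool" where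
  "gvc_formulated_as_bqp m n E c d q0 q1 q2 \<longleftrightarrow>
     (\<exists>Q a b K.
        (\<forall>U1 U2. U1 \<subseteq> {1..m} \<longrightarrow> U2 \<subseteq> {1..n} \<longrightarrow>
           gvc_obj E c d q0 q1 q2 U1 U2 = bqp_obj m n Q a b (incid U1) (incid U2) + K) \<and>
        (\<forall>U1 U2. U1 \<subseteq> {1..m} \<longrightarrow> U2 \<subseteq> {1..n} \<longrightarrow>
           bqp_opt m n Q a b (incid U1) (incid U2) \<longrightarrow> gvc_opt m n E c d q0 q1 q2 U1 U2))"

definition bqp_formulated_as_gvc ::
  "((nat \<Rightarrow> nat \<Rightarrow> real) \<Rightarrow> (nat \<Rightarrow> nat \<Rightarrow> real) \<Rightarrow> (nat \<Rightarrow> nat \<Rightarrow> real) \<Rightarrow> bool) \<Rightarrow>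
   nat \<Rightarrow> nat \<Rightarrow> (nat \<Rightarrow> nat \<Rightarrow> real) \<Rightarrow> (nat \<Rightarrow> real) \<Rightarrow> (nat \<Rightarrow> real) \<Rightarrow> bool" where
  "bqp_formulated_as_gvc cls m n Q a b \<longleftrightarrow>
     (\<exists>E c d q0 q1 q2 K. bip_graph m n E \<and> cls q0 q1 q2 \<and>
        (\<forall>x y. bqp_feas m n x y \<longrightarrow>
           bqp_obj m n Q a b x y = gvc_obj E c d q0 q1 q2 (supp01 m x) (supp01 n y) + K) \<and>
        (\<forall>U1 U2. gvc_opt m n E c d q0 q1 q2 U1 U2 \<longrightarrow>
           bqp_opt m n Q a b (incid U1) (incid U2)))"

definition equiv_bqp ::
  "((nat \<Rightarrow> nat \<Rightarrow> real) \<Rightarrow> (nat \<Rightarrow> nat \<Rightarrow> real) \<Rightarrow> (nat \<Rightarrow> nat \<Rightarrow> real) \<Rightarrow> bool) \<Rightarrow> bool" where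
  "equiv_bqp cls \<longleftrightarrow>
     (\<forall>m n E c d q0 q1 q2. bip_graph m n E \<longrightarrow> cls q0 q1 q2 \<longrightarrow>
         gvc_formulated_as_bqp m n E c d q0 q1 q2) \<and>
     (\<forall>m n Q a b. bqp_formulated_as_gvc cls m n Q a b)"

end

theory Submission imports Defs begin

lemma sum_E:
  fixes m n :: nat
  assumes "E \<subseteq> {1..m}\<times>{1..n}"
  shows "(\<Sum>(i,j)\<in>E. f i j) = (\<Sum>i=1..m. \<Sum>j=1..n. if (i,j)\<in>E then f i j else 0)"
proof -
  have fp: "finite ({1..m}\<times>{1..n})" by auto
  have ie: "{1..m}\<times>{1..n} \<inter> E = E" using assms by blast
  have "(\<Sum>(i,j)\<in>E. f i j) = (\<Sum>p\<in>{1..m}\<times>{1..n}. if p\<in>E then case p of (i,j) \<Rightarrow> f i j else 0)"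
    using assms sum.inter_restrict[OF fp, of "\<lambda>(i,j). f i j" E] ie by simp
  also have "\<dots> = (\<Sum>i=1..m. \<Sum>j=1..n. if (i,j)\<in>E then f i j else 0)"
    unfolding sum.cartesian_product by (intro sum.cong refl) (auto split: prod.splits)
  finally show ?thesis .
qed

lemma sum_sub:
  assumes "U \<subseteq> {1..m}"
  shows "(\<Sum>i\<in>U. c i) = (\<Sum>i=1..m. c i * incid U i)"
proof -
  have "(\<Sum>i\<in>U. c i) = (\<Sum>i\<in>{1..m} \<inter> U. c i)" using assms by (simp add: Int_absorb1)
  also have "\<dots> = (\<Sum>i=1..m. if i \<in> U then c i else 0)" by (simp add: sum.inter_restrict)
  finally show ?thesis by (simp add: incid_def if_distrib cong: if_cong)
qed

lemma sumE_ind: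
  assumes "finite E" "\<And>i j. (i,j)\<in>E \<Longrightarrow> (if P i j then q i j else 0) = g i j"
  shows "(\<Sum>(i,j)\<in>{(i,j)\<in>E. P i j}. q i j) = (\<Sum>(i,j)\<in>E. g i j)"
proof -
  have "{(i,j)\<in>E. P i j} = E \<inter> {p. case p of (i,j) \<Rightarrow> P i j}" by auto
  hence "(\<Sum>(i,j)\<in>{(i,j)\<in>E. P i j}. q i j) = (\<Sum>p\<in>E. if case p of (i,j) \<Rightarrow> P i j then case p of (i,j) \<Rightarrow> q i j else 0)"
    using assms(1) by (simp add: sum.inter_restrict)
  also have "\<dots> = (\<Sum>(i,j)\<in>E. g i j)"
  proof (intro sum.cong refl)
    fix p assume "p \<in> E"
    then obtain i j where p: "p = (i,j)" "(i,j)\<in>E" by (cases p) auto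
    show "(if case p of (i,j) \<Rightarrow> P i j then case p of (i,j) \<Rightarrow> q i j else 0) = (case p of (i,j) \<Rightarrow> g i j)"
      using assms(2)[OF p(2)] p(1) by (auto split: if_splits)
  qed
  finally show ?thesis .
qed

lemma gvc_obj_expand:
  assumes E: "E \<subseteq> {1..m}\<times>{1..n}" and U: "U1 \<subseteq> {1..m}" "U2 \<subseteq> {1..n}"
  shows "gvc_obj E c d q0 q1 q2 U1 U2 = (\<Sum>i=1..m. c i * incid U1 i) + (\<Sum>j=1..n. d j * incid U2 j)
    + (\<Sum>i=1..m. \<Sum>j=1..n. if (i,j)\<in>E then q0 i j * (1 - incid U1 i)*(1 - incid U2 j)
        + q1 i j * (incid U1 i + incid U2 j - 2*incid U1 i * incid U2 j)
        + q2 i j * incid U1 i * incid U2 j else 0)"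
proof -
  have fin: "finite E" using E finite_subset by blast
  have 0: "(\<Sum>(i,j)\<in>E0 E U1 U2. q0 i j) = (\<Sum>(i,j)\<in>E. q0 i j * (1 - incid U1 i)*(1 - incid U2 j))"
    unfolding E0_def by (rule sumE_ind[OF fin]) (auto simp: incid_def)
  have 1: "(\<Sum>(i,j)\<in>E1 E U1 U2. q1 i j) = (\<Sum>(i,j)\<in>E. q1 i j * (incid U1 i + incid U2 j - 2*incid U1 i * incid U2 j))"
    unfolding E1_def by (rule sumE_ind[OF fin]) (auto simp: incid_def)
  have 2: "(\<Sum>(i,j)\<in>E2 E U1 U2. q2 i j) = (\<Sum>(i,j)\<in>E. q2 i j * incid U1 i * incid U2 j)"
    unfolding E2_def by (rule sumE_ind[OF fin]) (auto simp: incid_def)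
  have s: "(\<Sum>(i,j)\<in>E. q0 i j * (1 - incid U1 i)*(1 - incid U2 j)) + (\<Sum>(i,j)\<in>E. q1 i j * (incid U1 i + incid U2 j - 2*incid U1 i * incid U2 j))
     + (\<Sum>(i,j)\<in>E. q2 i j * incid U1 i * incid U2 j) = (\<Sum>(i,j)\<in>E. q0 i j * (1 - incid U1 i)*(1 - incid U2 j)
        + q1 i j * (incid U1 i + incid U2 j - 2*incid U1 i * incid U2 j)
        + q2 i j * incid U1 i * incid U2 j)"
    by (simp add: sum.distrib[symmetric] split_def)
  have sE: "(\<Sum>(i,j)\<in>E. q0 i j * (1 - incid U1 i)*(1 - incid U2 j)
        + q1 i j * (incid U1 i + incid U2 j - 2*incid U1 i * incid U2 j)
        + q2 i j * incid U1 i * incid U2 j) = (\<Sum>i=1..m. \<Sum>j=1..n. if (i,j)\<in>E then q0 i j * (1 - incid U1 i)*(1 - incid U2 j)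
        + q1 i j * (incid U1 i + incid U2 j - 2*incid U1 i * incid U2 j)
        + q2 i j * incid U1 i * incid U2 j else 0)"
    using sum_E[OF E, of "\<lambda>i j. q0 i j * (1 - incid U1 i)*(1 - incid U2 j)
        + q1 i j * (incid U1 i + incid U2 j - 2*incid U1 i * incid U2 j)
        + q2 i j * incid U1 i * incid U2 j"] by simp
  show ?thesis unfolding gvc_obj_def 0 1 2
    using s sE sum_sub[OF U(1), of c] sum_sub[OF U(2), of d]
    by linarith
qed


lemma incid_feas: "bqp_feas m n (incid U1) (incid U2)"
  unfolding bqp_feas_def incid_def by auto

lemma sum_if_mult: "(\<Sum>j\<in>J. if P j then f j else 0) * (r::real) = (\<Sum>j\<in>J. if P j then f j * r else 0)"
  unfolding sum_distrib_right by (intro sum.cong refl) simp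

lemma part1_gen:
  assumes eq: "\<forall>U1 U2. U1 \<subseteq> {1..m} \<longrightarrow> U2 \<subseteq> {1..n} \<longrightarrow>
           gvc_obj E c d q0 q1 q2 U1 U2 = bqp_obj m n Q a b (incid U1) (incid U2) + K"
  shows "gvc_formulated_as_bqp m n E c d q0 q1 q2"
  unfolding gvc_formulated_as_bqp_def
proof (intro exI conjI allI impI)
  show "\<And>U1 U2. U1 \<subseteq> {1..m} \<Longrightarrow> U2 \<subseteq> {1..n} \<Longrightarrow>
           gvc_obj E c d q0 q1 q2 U1 U2 = bqp_obj m n Q a b (incid U1) (incid U2) + K"
    using eq by blast
  fix U1 U2 assume U: "U1 \<subseteq> {1..m}" "U2 \<subseteq> {1..n}" and o: "bqp_opt m n Q a b (incid U1) (incid U2)"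
  show "gvc_opt m n E c d q0 q1 q2 U1 U2"
    unfolding gvc_opt_def
  proof (intro conjI allI impI U)
    fix W1 W2 assume W: "W1 \<subseteq> {1..m}" "W2 \<subseteq> {1..n}"
    have "bqp_obj m n Q a b (incid U1) (incid U2) \<le> bqp_obj m n Q a b (incid W1) (incid W2)"
      using o incid_feas unfolding bqp_opt_def by blast
    thus "gvc_obj E c d q0 q1 q2 U1 U2 \<le> gvc_obj E c d q0 q1 q2 W1 W2"
      using eq U W by simp
  qed
qed

lemma part1:
  assumes bip: "bip_graph m n E"
  shows "gvc_formulated_as_bqp m n E c d q0 q1 q2"
proof (rule part1_gen[where
    Q = "\<lambda>i j. if (i,j)\<in>E then q0 i j - 2 * q1 i j + q2 i j else 0" and
    a = "\<lambda>i. c i + (\<Sum>j=1..n. if (i,j)\<in>E then q1 i j - q0 i j else 0)" and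
    b = "\<lambda>j. d j + (\<Sum>i=1..m. if (i,j)\<in>E then q1 i j - q0 i j else 0)" and
    K = "\<Sum>i=1..m. \<Sum>j=1..n. if (i,j)\<in>E then q0 i j else 0"], intro allI impI)
  have E: "E \<subseteq> {1..m}\<times>{1..n}" using bip unfolding bip_graph_def .
  fix U1 U2 assume U: "U1 \<subseteq> {1..m}" "U2 \<subseteq> {1..n}"
  define x where "x = incid U1"
  define y where "y = incid U2"
  have A: "(\<Sum>i=1..m. (c i + (\<Sum>j=1..n. if (i,j)\<in>E then q1 i j - q0 i j else 0)) * x i)
     = (\<Sum>i=1..m. c i * x i) + (\<Sum>i=1..m. \<Sum>j=1..n. if (i,j)\<in>E then (q1 i j - q0 i j) * x i else 0)"
    by (simp add: distrib_right sum.distrib sum_if_mult)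
  have B0: "(\<Sum>j=1..n. (d j + (\<Sum>i=1..m. if (i,j)\<in>E then q1 i j - q0 i j else 0)) * y j)
     = (\<Sum>j=1..n. d j * y j) + (\<Sum>j=1..n. \<Sum>i=1..m. if (i,j)\<in>E then (q1 i j - q0 i j) * y j else 0)"
    by (simp add: distrib_right sum.distrib sum_if_mult)
  have B: "(\<Sum>j=1..n. (d j + (\<Sum>i=1..m. if (i,j)\<in>E then q1 i j - q0 i j else 0)) * y j)
     = (\<Sum>j=1..n. d j * y j) + (\<Sum>i=1..m. \<Sum>j=1..n. if (i,j)\<in>E then (q1 i j - q0 i j) * y j else 0)"
    unfolding B0 using sum.swap[of "\<lambda>j i. if (i,j)\<in>E then (q1 i j - q0 i j) * y j else 0" "{1..m}" "{1..n}"] by simp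
  have C: "(\<Sum>i=1..m. \<Sum>j=1..n. if (i,j)\<in>E then (q1 i j - q0 i j) * x i else 0)
     + (\<Sum>i=1..m. \<Sum>j=1..n. if (i,j)\<in>E then (q1 i j - q0 i j) * y j else 0)
     + (\<Sum>i=1..m. \<Sum>j=1..n. (if (i,j)\<in>E then q0 i j - 2 * q1 i j + q2 i j else 0) * x i * y j)
     + (\<Sum>i=1..m. \<Sum>j=1..n. if (i,j)\<in>E then q0 i j else 0)
     = (\<Sum>i=1..m. \<Sum>j=1..n. if (i,j)\<in>E then q0 i j * (1 - x i)*(1 - y j)
        + q1 i j * (x i + y j - 2*x i * y j)
        + q2 i j * x i * y j else 0)"
    by (simp add: sum.distrib[symmetric]) (intro sum.cong refl, simp add: algebra_simps)
  show "gvc_obj E c d q0 q1 q2 U1 U2 =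
    bqp_obj m n (\<lambda>i j. if (i,j)\<in>E then q0 i j - 2 * q1 i j + q2 i j else 0)
     (\<lambda>i. c i + (\<Sum>j=1..n. if (i,j)\<in>E then q1 i j - q0 i j else 0))
     (\<lambda>j. d j + (\<Sum>i=1..m. if (i,j)\<in>E then q1 i j - q0 i j else 0)) (incid U1) (incid U2) +
    (\<Sum>i=1..m. \<Sum>j=1..n. if (i,j)\<in>E then q0 i j else 0)"
    unfolding gvc_obj_expand[OF E U] bqp_obj_def x_def[symmetric] y_def[symmetric]
    using A B C by linarith
qed


lemma bqp_obj_cong:
  assumes "\<And>i. i \<in> {1..m} \<Longrightarrow> x i = x' i" "\<And>j. j \<in> {1..n} \<Longrightarrow> y j = y' j"
  shows "bqp_obj m n Q a b x y = bqp_obj m n Q a b x' y'"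
proof -
  have 1: "(\<Sum>i=1..m. a i * x i) = (\<Sum>i=1..m. a i * x' i)" using assms(1) by (intro sum.cong) auto
  have 2: "(\<Sum>j=1..n. b j * y j) = (\<Sum>j=1..n. b j * y' j)" using assms(2) by (intro sum.cong) auto
  have 3: "(\<Sum>i=1..m. \<Sum>j=1..n. Q i j * x i * y j) = (\<Sum>i=1..m. \<Sum>j=1..n. Q i j * x' i * y' j)"
    using assms by (intro sum.cong refl) auto
  show ?thesis unfolding bqp_obj_def 1 2 3 ..
qed

lemma incid_supp:
  assumes "\<forall>i\<in>{1..k}. x i \<in> {0,1}" "i \<in> {1..k}"
  shows "incid (supp01 k x) i = x i"
  using assms unfolding incid_def supp01_def by auto

lemma part2_gen:
  assumes bip: "bip_graph m n E" and cl: "cls qa qb qc"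
    and eq: "\<And>U1 U2. U1 \<subseteq> {1..m} \<Longrightarrow> U2 \<subseteq> {1..n} \<Longrightarrow>
           bqp_obj m n Q a b (incid U1) (incid U2) = gvc_obj E c d qa qb qc U1 U2 + K"
  shows "bqp_formulated_as_gvc cls m n Q a b"
proof -
  have feq: "bqp_obj m n Q a b x y = gvc_obj E c d qa qb qc (supp01 m x) (supp01 n y) + K"
    if f: "bqp_feas m n x y" for x y
  proof -
    have "bqp_obj m n Q a b x y = bqp_obj m n Q a b (incid (supp01 m x)) (incid (supp01 n y))"
      using f unfolding bqp_feas_def by (intro bqp_obj_cong) (simp_all add: incid_supp)
    also have "\<dots> = gvc_obj E c d qa qb qc (supp01 m x) (supp01 n y) + K"
      by (rule eq) (auto simp: supp01_def)
    finally show ?thesis .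
  qed
  show ?thesis unfolding bqp_formulated_as_gvc_def
  proof (intro exI conjI allI impI)
    show "bip_graph m n E" by (rule bip)
    show "cls qa qb qc" by (rule cl)
    show "\<And>x y. bqp_feas m n x y \<Longrightarrow>
        bqp_obj m n Q a b x y = gvc_obj E c d qa qb qc (supp01 m x) (supp01 n y) + K"
      using feq by blast
    fix U1 U2 assume o: "gvc_opt m n E c d qa qb qc U1 U2"
    hence U: "U1 \<subseteq> {1..m}" "U2 \<subseteq> {1..n}" unfolding gvc_opt_def by auto
    show "bqp_opt m n Q a b (incid U1) (incid U2)"
      unfolding bqp_opt_def
    proof (intro conjI allI impI incid_feas)
      fix x' y' assume f: "bqp_feas m n x' y'"
      have "gvc_obj E c d qa qb qc U1 U2 \<le> gvc_obj E c d qa qb qc (supp01 m x') (supp01 n y')"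
        using o unfolding gvc_opt_def by (metis (no_types, lifting) mem_Collect_eq subsetI supp01_def)
      thus "bqp_obj m n Q a b (incid U1) (incid U2) \<le> bqp_obj m n Q a b x' y'"
        using feq[OF f] eq[OF U] by simp
    qed
  qed
qed

lemma part2_GVC2: "bqp_formulated_as_gvc cls_GVC2 m n Q a b"
proof (rule part2_gen[where E = "{1..m}\<times>{1..n}" and c = a and d = b and qa = "\<lambda>i j. 0"
    and qb = "\<lambda>i j. 0" and qc = Q and K = 0])
  show "bip_graph m n ({1..m}\<times>{1..n})" unfolding bip_graph_def by simp
  show "cls_GVC2 (\<lambda>i j. 0) (\<lambda>i j. 0) Q" unfolding cls_GVC2_def by simp
  fix U1 U2 assume U: "U1 \<subseteq> {1..m}" "U2 \<subseteq> {1..n}"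
  show "bqp_obj m n Q a b (incid U1) (incid U2) = gvc_obj ({1..m}\<times>{1..n}) a b (\<lambda>i j. 0) (\<lambda>i j. 0) Q U1 U2 + 0"
    unfolding gvc_obj_expand[OF subset_refl U] bqp_obj_def
    by (auto intro!: sum.cong simp: algebra_simps)
qed

lemma part2_GVC: "bqp_formulated_as_gvc cls_GVC m n Q a b"
proof (rule part2_gen[where E = "{1..m}\<times>{1..n}" and c = a and d = b and qa = "\<lambda>i j. 0"
    and qb = "\<lambda>i j. 0" and qc = Q and K = 0])
  show "bip_graph m n ({1..m}\<times>{1..n})" unfolding bip_graph_def by simp
  show "cls_GVC (\<lambda>i j. 0) (\<lambda>i j. 0) Q" unfolding cls_GVC_def by simp
  fix U1 U2 assume U: "U1 \<subseteq> {1..m}" "U2 \<subseteq> {1..n}"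
  show "bqp_obj m n Q a b (incid U1) (incid U2) = gvc_obj ({1..m}\<times>{1..n}) a b (\<lambda>i j. 0) (\<lambda>i j. 0) Q U1 U2 + 0"
    unfolding gvc_obj_expand[OF subset_refl U] bqp_obj_def
    by (auto intro!: sum.cong simp: algebra_simps)
qed

lemma part2_GVC1: "bqp_formulated_as_gvc cls_GVC1 m n Q a b"
proof (rule part2_gen[where E = "{1..m}\<times>{1..n}" and c = "\<lambda>i. a i + (\<Sum>j=1..n. Q i j)"
    and d = "\<lambda>j. b j + (\<Sum>i=1..m. Q i j)" and qa = Q
    and qb = "\<lambda>i j. 0" and qc = "\<lambda>i j. 0" and K = "- (\<Sum>i=1..m. \<Sum>j=1..n. Q i j)"])
  show "bip_graph m n ({1..m}\<times>{1..n})" unfolding bip_graph_def by simp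
  show "cls_GVC1 Q (\<lambda>i j. 0) (\<lambda>i j. 0)" unfolding cls_GVC1_def by simp
  fix U1 U2 assume U: "U1 \<subseteq> {1..m}" "U2 \<subseteq> {1..n}"
  define x where "x = incid U1"
  define y where "y = incid U2"
  have A: "(\<Sum>i=1..m. (a i + (\<Sum>j=1..n. Q i j)) * x i) = (\<Sum>i=1..m. a i * x i) + (\<Sum>i=1..m. \<Sum>j=1..n. Q i j * x i)"
    by (simp add: distrib_right sum.distrib sum_distrib_right)
  have B: "(\<Sum>j=1..n. (b j + (\<Sum>i=1..m. Q i j)) * y j) = (\<Sum>j=1..n. b j * y j) + (\<Sum>i=1..m. \<Sum>j=1..n. Q i j * y j)"
    using sum.swap[of "\<lambda>i j. Q i j * y j" "{1..n}" "{1..m}"]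
    by (simp add: distrib_right sum.distrib sum_distrib_right)
  have C: "(\<Sum>i=1..m. \<Sum>j=1..n. if (i,j)\<in>{1..m}\<times>{1..n} then Q i j * (1 - x i)*(1 - y j)
        + 0 * (x i + y j - 2*x i * y j) + 0 * x i * y j else 0)
     = (\<Sum>i=1..m. \<Sum>j=1..n. Q i j) - (\<Sum>i=1..m. \<Sum>j=1..n. Q i j * x i)
       - (\<Sum>i=1..m. \<Sum>j=1..n. Q i j * y j) + (\<Sum>i=1..m. \<Sum>j=1..n. Q i j * x i * y j)"
    by (simp add: sum.distrib[symmetric] sum_subtractf[symmetric]) (intro sum.cong refl, simp add: algebra_simps)
  show "bqp_obj m n Q a b (incid U1) (incid U2) = gvc_obj ({1..m}\<times>{1..n}) (\<lambda>i. a i + (\<Sum>j=1..n. Q i j))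
     (\<lambda>j. b j + (\<Sum>i=1..m. Q i j)) Q (\<lambda>i j. 0) (\<lambda>i j. 0) U1 U2 + - (\<Sum>i=1..m. \<Sum>j=1..n. Q i j)"
    unfolding gvc_obj_expand[OF subset_refl U] bqp_obj_def x_def[symmetric] y_def[symmetric]
    using A B C by linarith
qed

theorem theorem4:
  shows "equiv_bqp cls_GVC \<and> equiv_bqp cls_GVC1 \<and> equiv_bqp cls_GVC2"
  unfolding equiv_bqp_def using part1 part2_GVC part2_GVC1 part2_GVC2 by blast

end
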